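(* Let $C$ be the cycle on $n\ge 3$ vertices and $\Delta$ its distance squared matrix. If $n\equiv 1\pmod 4$, then $i_+(\Delta)=\frac{n-1}{2}+1$ and $i_-(\Delta)=\frac{n-1}{2}$. If $n\equiv 3\pmod 4$, then $i_+(\Delta)=\frac{n-1}{2}$ and $i_-(\Delta)=\frac{n-1}{2}+1$. If $n$ is even, then $i_+(\Delta)=i_-(\Delta)=\frac n2$.
   Context: For a connected graph with vertices $1,\dots,n$, the distance squared matrix is the $n\times n$ matrix with $(i,j)$ entry $d_{ij}^2$, where $d_{ij}$ is the graph distance between $i$ and $j$. For a real symmetric matrix $M$, $i_+(M)$ and $i_-(M)$ denote the numbers of positive and negative eigenvalues of $M$, counted with multiplicity. *)

theory Defs
  imports "Jordan_Normal_Form.Char_Poly"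
begin

text \<open>Cycle graph C_n on the vertex set {0..<n} (vertex k stands for vertex k+1 of the paper):
  i and j are adjacent iff they are cyclically consecutive.\<close>
definition cycle_adj :: "nat \<Rightarrow> nat \<Rightarrow> nat \<Rightarrow> bool" where
  "cycle_adj n i j \<longleftrightarrow> i < n \<and> j < n \<and> (j = (i + 1) mod n \<or> i = (j + 1) mod n)"

definition has_walk :: "(nat \<Rightarrow> nat \<Rightarrow> bool) \<Rightarrow> nat \<Rightarrow> nat \<Rightarrow> nat \<Rightarrow> bool" where
  "has_walk E k i j \<longleftrightarrow> (\<exists>p. p 0 = i \<and> p k = j \<and> (\<forall>t<k. E (p t) (p (Suc t))))"

text \<open>Graph distance: length of a shortest walk (the graph is assumed connected).\<close>
definition graph_dist :: "(nat \<Rightarrow> nat \<Rightarrow> bool) \<Rightarrow> nat \<Rightarrow> nat \<Rightarrow> nat" where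
  "graph_dist E i j = (LEAST k. has_walk E k i j)"

definition cycle_dist_sq_matrix :: "nat \<Rightarrow> real mat" where
  "cycle_dist_sq_matrix n = mat n n (\<lambda>(i, j). (real (graph_dist (cycle_adj n) i j))^2)"

definition i_plus :: "real mat \<Rightarrow> nat" where
  "i_plus A = (\<Sum>r\<in>{r. poly (char_poly A) r = 0 \<and> r > 0}. order r (char_poly A))"

definition i_minus :: "real mat \<Rightarrow> nat" where
  "i_minus A = (\<Sum>r\<in>{r. poly (char_poly A) r = 0 \<and> r < 0}. order r (char_poly A))"

end

theory Submission
  imports Defs
begin


lemma walk_step:
  assumes "cycle_adj n a b" "i < n" "a < n"
  shows "min ((b + n - i) mod n) (n - (b + n - i) mod n) \<le> min ((a + n - i) mod n) (n - (a + n - i) mod n) + 1"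
proof -
  have b: "b < n" using assms unfolding cycle_adj_def by auto
  have da: "(a + n - i) mod n = (if i \<le> a then a - i else a + n - i)"
    using assms by (auto simp: mod_if)
  have db: "(b + n - i) mod n = (if i \<le> b then b - i else b + n - i)"
    using assms b by (auto simp: mod_if)
  from assms(1) have "(b = a + 1 \<and> a + 1 < n) \<or> (a = n - 1 \<and> b = 0) \<or> (a = b + 1 \<and> b + 1 < n) \<or> (b = n - 1 \<and> a = 0)"
    unfolding cycle_adj_def by (auto simp: mod_if split: if_splits)
  then show ?thesis unfolding da db using assms b by auto
qed

lemma walk_lower:
  assumes "has_walk (cycle_adj n) k i j" "i < n"
  shows "min ((j + n - i) mod n) (n - (j + n - i) mod n) \<le> k"
proof -
  obtain p where p: "p 0 = i" "p k = j" "\<forall>t<k. cycle_adj n (p t) (p (Suc t))"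
    using assms unfolding has_walk_def by auto
  have "t \<le> k \<Longrightarrow> p t < n \<and> min ((p t + n - i) mod n) (n - (p t + n - i) mod n) \<le> t" for t
  proof (induction t)
    case 0 then show ?case using p assms by auto
  next
    case (Suc t)
    then have adj: "cycle_adj n (p t) (p (Suc t))" using p by auto
    then have "p (Suc t) < n" unfolding cycle_adj_def by auto
    moreover have "min ((p (Suc t) + n - i) mod n) (n - (p (Suc t) + n - i) mod n) \<le> min ((p t + n - i) mod n) (n - (p t + n - i) mod n) + 1"
      using walk_step[OF adj assms(2)] Suc by auto
    ultimately show ?case using Suc by auto
  qed
  then show ?thesis using p by auto
qed

lemma walk_fwd:
  assumes "i < n" "j < n"
  shows "has_walk (cycle_adj n) ((j + n - i) mod n) i j"
  unfolding has_walk_def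
proof (intro exI[of _ "\<lambda>t. (i + t) mod n"] conjI allI impI)
  show "(i + 0) mod n = i" using assms by auto
  show "(i + (j + n - i) mod n) mod n = j"
    using assms by (auto simp: mod_if)
  fix t show "cycle_adj n ((i + t) mod n) ((i + Suc t) mod n)"
    using assms unfolding cycle_adj_def by (auto simp: mod_Suc_eq)
qed

lemma walk_bwd:
  assumes "i < n" "j < n"
  shows "has_walk (cycle_adj n) ((i + n - j) mod n) i j"
  unfolding has_walk_def
proof (intro exI[of _ "\<lambda>t. (j + ((i + n - j) mod n - t)) mod n"] conjI allI impI)
  show "(j + ((i + n - j) mod n - 0)) mod n = i" using assms by (auto simp: mod_if)
  show "(j + ((i + n - j) mod n - (i + n - j) mod n)) mod n = j"
    using assms by auto
  fix t assume "t < (i + n - j) mod n"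
  then have e: "j + ((i + n - j) mod n - t) = Suc (j + ((i + n - j) mod n - Suc t))" by auto
  show "cycle_adj n ((j + ((i + n - j) mod n - t)) mod n) ((j + ((i + n - j) mod n - Suc t)) mod n)"
    using assms unfolding cycle_adj_def e by (auto simp: mod_Suc_eq)
qed

lemma dist_cycle:
  assumes "i < n" "j < n"
  shows "graph_dist (cycle_adj n) i j = min ((j + n - i) mod n) (n - (j + n - i) mod n)"
proof -
  let ?d = "(j + n - i) mod n"
  have lo: "\<And>k. has_walk (cycle_adj n) k i j \<Longrightarrow> min ?d (n - ?d) \<le> k"
    using walk_lower assms by blast
  have "has_walk (cycle_adj n) (min ?d (n - ?d)) i j"
  proof (cases "?d = 0")
    case True then show ?thesis using walk_fwd[OF assms] by simp
  next
    case False
    have "(i + n - j) mod n = n - ?d" using assms False by (auto simp: mod_if)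
    then show ?thesis using walk_fwd[OF assms] walk_bwd[OF assms] by (cases "?d \<le> n - ?d") (auto simp: min_def)
  qed
  then show ?thesis unfolding graph_dist_def
    by (intro Least_equality) (auto intro: lo)
qed



definition ff :: "nat \<Rightarrow> nat \<Rightarrow> real" where
  "ff n k = (real (min k (n - k)))^2"

definition DD :: "nat \<Rightarrow> (nat \<Rightarrow> 'a::ring_1) \<Rightarrow> nat \<Rightarrow> 'a" where
  "DD n g k = g ((k + 1) mod n) + g ((k + n - 1) mod n) - 2 * g k"

lemma mod_pred_lemma: "0 < (k::nat) \<Longrightarrow> k \<le> n \<Longrightarrow> (k + n - 1) mod n = k - 1"
proof -
  assume a: "0 < k" "k \<le> n"
  have e: "k + n - 1 = (k - 1) + n" using a by auto
  have m1: "(k - 1 + n) mod n = (k - 1) mod n" by (rule mod_add_self2)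
  show ?thesis unfolding e m1 using a by simp
qed

lemma DD_ff_odd:
  assumes "n = 2 * p + 1" "p \<ge> 1" "k < n"
  shows "DD n (ff n) k = (if k = p \<or> k = p + 1 then 2 - real n else 2)"
proof -
  consider "k = 0" | "k = n - 1" | "0 < k" "k < n - 1" using assms by linarith
  then show ?thesis
  proof cases
    case 1 then show ?thesis using assms by (simp add: DD_def ff_def)
  next
    case 2 
    have "(k + 1) mod n = 0" "(k + n - 1) mod n = k - 1" using assms 2 mod_pred_lemma[of k n] by auto
    then show ?thesis using assms 2 by (auto simp add: DD_def ff_def min_def power2_eq_square algebra_simps)
  next
    case 3
    then have "(k + 1) mod n = k + 1" "(k + n - 1) mod n = k - 1" using assms mod_pred_lemma[of k n] by auto
    then show ?thesis using assms 3
      by (auto simp add: DD_def ff_def min_def power2_eq_square algebra_simps of_nat_diff)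
  qed
qed

lemma DD_ff_even:
  assumes "n = 2 * p" "p \<ge> 2" "k < n"
  shows "DD n (ff n) k = (if k = p then 2 - 2 * real n else 2)"
proof -
  consider "k = 0" | "k = n - 1" | "0 < k" "k < n - 1" using assms by linarith
  then show ?thesis
  proof cases
    case 1 then show ?thesis using assms by (simp add: DD_def ff_def)
  next
    case 2 
    have "(k + 1) mod n = 0" "(k + n - 1) mod n = k - 1" using assms 2 mod_pred_lemma[of k n] by auto
    then show ?thesis using assms 2 by (auto simp add: DD_def ff_def min_def power2_eq_square algebra_simps)
  next
    case 3
    then have e: "(k + 1) mod n = k + 1" "(k + n - 1) mod n = k - 1" using assms mod_pred_lemma[of k n] by auto
    consider "k < p" | "k = p" | "k = p + 1" | "k > p + 1" by linarith
    then show ?thesis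
    proof cases
      case 1 then show ?thesis using assms 3 e
        by (auto simp add: DD_def ff_def min_def power2_eq_square algebra_simps of_nat_diff)
    next
      case 2 then show ?thesis using assms 3 e
        by (auto simp add: DD_def ff_def min_def power2_eq_square algebra_simps of_nat_diff)
    next
      case 3 then show ?thesis using assms 3 e
        by (auto simp add: DD_def ff_def min_def power2_eq_square algebra_simps of_nat_diff)
    next
      case 4 then show ?thesis using assms 3 e
        by (auto simp add: DD_def ff_def min_def power2_eq_square algebra_simps of_nat_diff)
    qed
  qed
qed

lemma power_mod_n:
  fixes z :: "'a::comm_monoid_mult"
  assumes "z ^ n = 1"
  shows "z ^ (a mod n) = z ^ a"
proof -
  have "z ^ a = z ^ (a mod n) * (z ^ n) ^ (a div n)"
    by (metis mod_div_mult_eq power_add power_mult mult.commute)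
  then show ?thesis using assms by simp
qed

lemma shift_sum:
  fixes z :: complex
  assumes "z ^ n = 1" "n > 0"
  shows "(\<Sum>k<n. g ((k + 1) mod n) * z ^ k) * z = (\<Sum>k<n. g k * z ^ k)"
proof -
  have "(\<Sum>k<n. g ((k + 1) mod n) * z ^ k) * z = (\<Sum>k<n. g ((k + 1) mod n) * z ^ ((k + 1) mod n))"
    unfolding sum_distrib_right power_mod_n[OF assms(1)] by (simp add: algebra_simps)
  also have "\<dots> = (\<Sum>k<n. g k * z ^ k)"
  proof (rule sum.reindex_bij_witness[where i = "\<lambda>k. (k + n - 1) mod n" and j = "\<lambda>k. (k + 1) mod n"])
    fix a assume a: "a \<in> {..<n}"
    show "(a + 1) mod n \<in> {..<n}" using assms by simp
    show "((a + 1) mod n + n - 1) mod n = a" 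
    proof (cases "a + 1 = n")
      case True then show ?thesis using assms by simp
    next
      case False then have "(a + 1) mod n = a + 1" using a by simp
      then show ?thesis using a by simp
    qed
    show "(a + n - 1) mod n \<in> {..<n}" using assms by simp
    show "((a + n - 1) mod n + 1) mod n = a"
    proof (cases "a = 0")
      case True then show ?thesis using assms by (simp add: mod_Suc_eq)
    next
      case False then show ?thesis using a mod_pred_lemma[of a n] by simp
    qed
  next
    fix a assume "a \<in> {..<n}"
    show "g ((a + 1) mod n) * z ^ ((a + 1) mod n) = g ((a + 1) mod n) * z ^ ((a + 1) mod n)" by simp
  qed
  finally show ?thesis .
qed

lemma shift_sum2:
  fixes z :: complex
  assumes "z ^ n = 1" "n > 0"
  shows "(\<Sum>k<n. g ((k + n - 1) mod n) * z ^ k) = z * (\<Sum>k<n. g k * z ^ k)"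
proof -
  have h: "(\<Sum>k<n. g (((k + 1) mod n + n - 1) mod n) * z ^ k) * z = (\<Sum>k<n. g ((k + n - 1) mod n) * z ^ k)"
    using shift_sum[OF assms, of "\<lambda>k. g ((k + n - 1) mod n)"] by simp
  have "(\<Sum>k<n. g (((k + 1) mod n + n - 1) mod n) * z ^ k) = (\<Sum>k<n. g k * z ^ k)"
  proof (rule sum.cong[OF refl])
    fix a assume a: "a \<in> {..<n}"
    have "((a + 1) mod n + n - 1) mod n = a" 
    proof (cases "a + 1 = n")
      case True then show ?thesis using assms by simp
    next
      case False then have "(a + 1) mod n = a + 1" using a by simp
      then show ?thesis using a by simp
    qed
    then show "g (((a + 1) mod n + n - 1) mod n) * z ^ a = g a * z ^ a" by simp
  qed
  then show ?thesis using h by (simp add: mult.commute)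
qed



definition zz :: "nat \<Rightarrow> nat \<Rightarrow> complex" where
  "zz n m = cis (2 * pi * real m / real n)"

definition lam :: "nat \<Rightarrow> nat \<Rightarrow> complex" where
  "lam n m = (\<Sum>k<n. complex_of_real (ff n k) * zz n m ^ k)"

lemma zz_pow: assumes "n > 0" shows "zz n m ^ n = 1"
proof -
  have "zz n m ^ n = cis (2 * real m * pi)"
    unfolding zz_def DeMoivre using assms by (simp add: field_simps)
  also have "\<dots> = 1" by (simp add: complex_eq_iff cos_2npi sin_2npi)
  finally show ?thesis .
qed

lemma one_minus_cos_pos:
  assumes "0 < m" "m < n"
  shows "1 - cos (2 * pi * real m / real n) > 0"
proof -
  have "cos (2 * (pi * real m / real n)) = 1 - 2 * (sin (pi * real m / real n))^2"
    by (rule cos_double_sin)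
  moreover have "sin (pi * real m / real n) > 0"
    using assms by (intro sin_gt_zero) (auto simp: field_simps)
  ultimately show ?thesis by (simp add: mult.assoc)
qed

lemma zz_ne1: assumes "0 < m" "m < n" shows "zz n m \<noteq> 1"
proof
  assume "zz n m = 1"
  then have "Re (zz n m) = 1" by simp
  then show False using one_minus_cos_pos[OF assms] unfolding zz_def by simp
qed

lemma sum_zz_0: assumes "0 < m" "m < n" shows "(\<Sum>k<n. zz n m ^ k) = 0"
  using geometric_sum[OF zz_ne1[OF assms], of n] zz_pow[of n m] assms by simp

lemma lam_identity:
  assumes "n > 0"
  shows "lam n m * (zz n m - 1)^2 = zz n m * (\<Sum>k<n. complex_of_real (DD n (ff n) k) * zz n m ^ k)"
proof -
  define z where "z = zz n m"
  define g where "g k = complex_of_real (ff n k)" for k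
  have zn: "z ^ n = 1" using zz_pow[OF assms] z_def by simp
  define X where "X = (\<Sum>k<n. g ((k + 1) mod n) * z ^ k)"
  define Y where "Y = (\<Sum>k<n. g ((k + n - 1) mod n) * z ^ k)"
  have L: "lam n m = (\<Sum>k<n. g k * z ^ k)" unfolding lam_def g_def z_def ..
  have hX: "X * z = lam n m" unfolding X_def L by (rule shift_sum[OF zn assms])
  have hY: "Y = z * lam n m" unfolding Y_def L by (rule shift_sum2[OF zn assms])
  have "(\<Sum>k<n. complex_of_real (DD n (ff n) k) * z ^ k) = X + Y - 2 * lam n m"
    unfolding X_def Y_def L DD_def g_def
    by (simp add: algebra_simps sum.distrib sum_subtractf sum_distrib_left)
  then have "z * (\<Sum>k<n. complex_of_real (DD n (ff n) k) * z ^ k) = z * (X + Y - 2 * lam n m)"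
    by simp
  also have "\<dots> = X * z + z * Y - 2 * z * lam n m"
    by (simp add: algebra_simps)
  also have "\<dots> = lam n m * (z - 1)^2" unfolding hX hY by (simp add: algebra_simps power2_eq_square)
  finally show ?thesis unfolding z_def by simp
qed

lemma zz_sq: "(zz n m - 1)^2 = zz n m * complex_of_real (2 * cos (2 * pi * real m / real n) - 2)"
proof -
  define t where "t = 2 * pi * real m / real n"
  have "(zz n m - 1)^2 = cis t ^ 2 - 2 * cis t + 1" unfolding zz_def t_def by (simp add: power2_eq_square algebra_simps)
  also have "cis t ^ 2 = cis (2 * t)" by (simp add: DeMoivre)
  finally have e: "(zz n m - 1)^2 = cis (2 * t) - 2 * cis t + 1" .
  have c2: "cos (2 * t) = 2 * cos t ^ 2 - 1" by (rule cos_double_cos)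
  have s2: "sin (2 * t) = 2 * sin t * cos t" by (rule sin_double)
  show ?thesis unfolding e zz_def t_def[symmetric]
    by (simp add: complex_eq_iff c2 s2 power2_eq_square algebra_simps)
qed

lemma cis_cos_sum:
  assumes "b = 2 * real m * pi - a"
  shows "cis a + cis b = complex_of_real (2 * cos a)"
  using assms by (simp add: complex_eq_iff cos_diff sin_diff cos_2npi sin_2npi)

lemma lam_odd:
  assumes "n = 2 * p + 1" "p \<ge> 1" "0 < m" "m < n"
  shows "lam n m = complex_of_real (real n * cos (real p * (2 * pi * real m / real n)) / (1 - cos (2 * pi * real m / real n)))"
proof -
  define t where "t = 2 * pi * real m / real n"
  define z where "z = zz n m"
  have n0: "n > 0" using assms by simp
  have "(\<Sum>k<n. complex_of_real (DD n (ff n) k) * z ^ k)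
      = (\<Sum>k<n. 2 * z ^ k - of_nat n * (if k = p then z ^ k else 0) - of_nat n * (if k = p + 1 then z ^ k else 0))"
    by (rule sum.cong[OF refl]) (use assms DD_ff_odd[OF assms(1,2)] in \<open>auto simp: algebra_simps\<close>)
  also have "\<dots> = 2 * (\<Sum>k<n. z ^ k) - of_nat n * z ^ p - of_nat n * z ^ (p + 1)"
    using assms by (simp add: sum_subtractf sum_distrib_left[symmetric] sum.delta if_distrib[of "\<lambda>x. of_nat n * x"] cong: if_cong)
  also have "(\<Sum>k<n. z ^ k) = 0" unfolding z_def by (rule sum_zz_0[OF assms(3,4)])
  finally have S: "(\<Sum>k<n. complex_of_real (DD n (ff n) k) * z ^ k) = - of_nat n * (z ^ p + z ^ (p + 1))"
    by (simp add: algebra_simps)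
  have zp: "z ^ p + z ^ (p + 1) = complex_of_real (2 * cos (real p * t))"
    unfolding z_def zz_def DeMoivre t_def[symmetric]
    by (rule cis_cos_sum) (use assms in \<open>simp add: t_def field_simps\<close>)
  have "lam n m * (z * complex_of_real (2 * cos t - 2)) = z * (- of_nat n * complex_of_real (2 * cos (real p * t)))"
    using lam_identity[OF n0, of m] zz_sq[of n m] S zp unfolding z_def t_def by simp
  moreover have "z \<noteq> 0" unfolding z_def zz_def by (rule cis_neq_zero)
  ultimately have E: "z * (lam n m * complex_of_real (2 * cos t - 2)) = z * complex_of_real (- real n * (2 * cos (real p * t)))"
    by (simp add: algebra_simps)
  have "lam n m * complex_of_real (2 * cos t - 2) = complex_of_real (- real n * (2 * cos (real p * t)))"
    using E \<open>z \<noteq> 0\<close> mult_cancel_left by blast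
  moreover have "2 * cos t - 2 \<noteq> 0" using one_minus_cos_pos[of m n] assms unfolding t_def by simp
  ultimately have "lam n m = complex_of_real (- real n * (2 * cos (real p * t)) / (2 * cos t - 2))"
    by (simp add: field_simps)
  also have "- real n * (2 * cos (real p * t)) / (2 * cos t - 2) = real n * cos (real p * t) / (1 - cos t)"
    using \<open>2 * cos t - 2 \<noteq> 0\<close> by (simp add: field_simps)
  finally show ?thesis unfolding t_def .
qed

lemma lam_even:
  assumes "n = 2 * p" "p \<ge> 2" "0 < m" "m < n"
  shows "lam n m = complex_of_real (real n * (-1) ^ m / (1 - cos (2 * pi * real m / real n)))"
proof -
  define t where "t = 2 * pi * real m / real n"
  define z where "z = zz n m"
  have n0: "n > 0" using assms by simp
  have "(\<Sum>k<n. complex_of_real (DD n (ff n) k) * z ^ k)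
      = (\<Sum>k<n. 2 * z ^ k - 2 * of_nat n * (if k = p then z ^ k else 0))"
    by (rule sum.cong[OF refl]) (use assms DD_ff_even[OF assms(1,2)] in \<open>auto simp: algebra_simps\<close>)
  also have "\<dots> = 2 * (\<Sum>k<n. z ^ k) - 2 * of_nat n * z ^ p"
    using assms by (simp add: sum_subtractf sum_distrib_left[symmetric] sum.delta if_distrib[of "\<lambda>x. 2 * of_nat n * x"] cong: if_cong)
  also have "(\<Sum>k<n. z ^ k) = 0" unfolding z_def by (rule sum_zz_0[OF assms(3,4)])
  finally have S: "(\<Sum>k<n. complex_of_real (DD n (ff n) k) * z ^ k) = - 2 * of_nat n * z ^ p"
    by (simp add: algebra_simps)
  have pt: "real p * t = real m * pi" unfolding t_def using assms by (simp add: field_simps)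
  have zp: "z ^ p = complex_of_real ((-1) ^ m)"
    unfolding z_def zz_def DeMoivre t_def[symmetric] pt
    by (simp add: complex_eq_iff cos_npi sin_npi)
  have "lam n m * (z * complex_of_real (2 * cos t - 2)) = z * (- 2 * of_nat n * complex_of_real ((-1) ^ m))"
    using lam_identity[OF n0, of m] zz_sq[of n m] S zp unfolding z_def t_def by simp
  moreover have "z \<noteq> 0" unfolding z_def zz_def by (rule cis_neq_zero)
  ultimately have E: "z * (lam n m * complex_of_real (2 * cos t - 2)) = z * complex_of_real (- 2 * real n * (-1) ^ m)"
    by (simp add: algebra_simps)
  have "lam n m * complex_of_real (2 * cos t - 2) = complex_of_real (- 2 * real n * (-1) ^ m)"
    using E \<open>z \<noteq> 0\<close> mult_cancel_left by blast
  moreover have "2 * cos t - 2 \<noteq> 0" using one_minus_cos_pos[of m n] assms unfolding t_def by simp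
  ultimately have "lam n m = complex_of_real (- 2 * real n * (-1) ^ m / (2 * cos t - 2))"
    by (simp add: field_simps)
  also have "- 2 * real n * (-1) ^ m / (2 * cos t - 2) = real n * (-1) ^ m / (1 - cos t)"
    using \<open>2 * cos t - 2 \<noteq> 0\<close> by (simp add: field_simps)
  finally show ?thesis unfolding t_def .
qed

lemma lam_0: assumes "n \<ge> 3" shows "lam n 0 = complex_of_real (\<Sum>k<n. ff n k)" "(\<Sum>k<n. ff n k) > 0"
proof -
  show "lam n 0 = complex_of_real (\<Sum>k<n. ff n k)" unfolding lam_def zz_def by simp
  have "ff n 1 \<le> (\<Sum>k<n. ff n k)"
    by (rule member_le_sum) (use assms in \<open>auto simp: ff_def\<close>)
  moreover have "ff n 1 = 1" using assms by (simp add: ff_def)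
  ultimately show "(\<Sum>k<n. ff n k) > 0" by simp
qed



definition mu :: "nat \<Rightarrow> nat \<Rightarrow> real" where "mu n m = Re (lam n m)"

lemma cos_sign_odd:
  assumes "n = 2 * p + 1" "0 < m" "m < n"
  shows "cos (real p * (2 * pi * real m / real n)) = (-1) ^ m * cos (pi * real m / real n)"
proof -
  have "real p * (2 * pi * real m / real n) = real m * pi - pi * real m / real n"
    using assms by (simp add: field_simps)
  then show ?thesis by (simp add: cos_diff cos_npi sin_npi)
qed

lemma cos_pos_half: assumes "2 * m < n" shows "cos (pi * real m / real n) > 0"
proof (rule cos_gt_zero_pi)
  have "real m / real n < 1 / 2" using assms by (simp add: field_simps)
  then have "pi * (real m / real n) < pi * (1/2)" by (intro mult_strict_left_mono) auto
  then show "pi * real m / real n < pi / 2" by simp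
  show "- (pi / 2) < pi * real m / real n" 
    by (rule less_le_trans[of _ 0]) auto
qed

lemma cos_neg_half: assumes "n < 2 * m" "m < n" shows "cos (pi * real m / real n) < 0"
proof -
  have "cos (pi - pi * real m / real n) > 0"
  proof (rule cos_gt_zero_pi)
    have "real m / real n > 1 / 2" using assms by (simp add: field_simps)
    then have "pi * (real m / real n) > pi * (1/2)" by (intro mult_strict_left_mono) auto
    then show "pi - pi * real m / real n < pi / 2" by simp
    have "real m / real n < 1" using assms by simp
    then have "pi * (real m / real n) < pi * 1" by (intro mult_strict_left_mono) auto
    then have "pi * real m / real n < pi" by simp
    then show "- (pi / 2) < pi - pi * real m / real n" using pi_gt_zero by linarith
  qed
  then show ?thesis by (simp add: cos_pi_minus)
qed

lemma lam_real: assumes "n \<ge> 3" "m < n" shows "lam n m = complex_of_real (mu n m)"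
proof (cases "m = 0")
  case True then show ?thesis using lam_0[OF assms(1)] unfolding mu_def by simp
next
  case False
  show ?thesis
  proof (cases "even n")
    case True
    then obtain p where p: "n = 2 * p" by auto
    then have "p \<ge> 2" using assms by simp
    from lam_even[OF p this] False assms show ?thesis unfolding mu_def by simp
  next
    case False': False
    then obtain p where p: "n = 2 * p + 1" using oddE by blast
    then have "p \<ge> 1" using assms by simp
    from lam_odd[OF p this] False assms show ?thesis unfolding mu_def by simp
  qed
qed

lemma mu_even:
  assumes "n = 2 * p" "p \<ge> 2" "m < n"
  shows "(mu n m > 0 \<longleftrightarrow> even m) \<and> mu n m \<noteq> 0"
proof (cases "m = 0")
  case True then show ?thesis using lam_0[of n] assms unfolding mu_def by simp
next
  case False
  have c: "1 - cos (2 * pi * real m / real n) > 0" using one_minus_cos_pos[of m n] False assms by simp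
  have n: "real n > 0" using assms by simp
  define D where "D = 1 - cos (2 * pi * real m / real n)"
  have sg: "real n * x / D > 0 \<longleftrightarrow> x > 0" "real n * x / D < 0 \<longleftrightarrow> x < 0" for x
    using c n unfolding D_def[symmetric] by (auto simp: zero_less_divide_iff zero_less_mult_iff divide_less_0_iff mult_less_0_iff)
  have "mu n m = real n * (-1) ^ m / D"
    using lam_even[OF assms(1,2)] False assms unfolding mu_def D_def by simp
  then show ?thesis using sg[of "(-1)^m"] using assms by (cases "even m") auto
qed

lemma mu_odd:
  assumes "n = 2 * p + 1" "p \<ge> 1" "m < n"
  shows "(mu n m > 0 \<longleftrightarrow> m = 0 \<or> (even m \<and> 2 * m < n) \<or> (odd m \<and> n < 2 * m)) \<and> mu n m \<noteq> 0"
proof (cases "m = 0")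
  case True then show ?thesis using lam_0[of n] assms unfolding mu_def by simp
next
  case False
  have c: "1 - cos (2 * pi * real m / real n) > 0" using one_minus_cos_pos[of m n] False assms by simp
  have n: "real n > 0" using assms by simp
  define D where "D = 1 - cos (2 * pi * real m / real n)"
  define C where "C = cos (pi * real m / real n)"
  have sg: "real n * x / D > 0 \<longleftrightarrow> x > 0" "real n * x / D < 0 \<longleftrightarrow> x < 0" for x
    using c n unfolding D_def[symmetric] by (auto simp: zero_less_divide_iff zero_less_mult_iff divide_less_0_iff mult_less_0_iff)
  have mu: "mu n m = real n * ((-1) ^ m * C) / D"
    using lam_odd[OF assms(1,2)] cos_sign_odd[OF assms(1)] False assms unfolding mu_def D_def C_def by simp
  have "2 * m < n \<or> n < 2 * m" using assms by presburger
  then show ?thesis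
  proof
    assume h: "2 * m < n"
    then have "C > 0" unfolding C_def by (rule cos_pos_half)
    then show ?thesis unfolding mu using sg[of "(-1)^m * C"] h False using assms by (cases "even m") auto
  next
    assume h: "n < 2 * m"
    then have "C < 0" unfolding C_def using assms(3) by (intro cos_neg_half)
    then show ?thesis unfolding mu using sg[of "(-1)^m * C"] h False using assms by (cases "even m") (auto simp: mult_less_0_iff)
  qed
qed



interpretation ofr_poly: map_poly_inj_comm_ring_hom "of_real :: real \<Rightarrow> complex" ..

lemma A_entry:
  assumes "i < n" "j < n"
  shows "cycle_dist_sq_matrix n $$ (i, j) = ff n ((j + n - i) mod n)"
  unfolding cycle_dist_sq_matrix_def using assms dist_cycle[OF assms] by (simp add: ff_def)

lemma cnj_zz: "cnj (zz n m) * zz n l = cis (2 * pi * real l / real n - 2 * pi * real m / real n)"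
  unfolding zz_def by (simp add: cis_cnj cis_mult)

lemma zz_diff: "m \<le> l \<Longrightarrow> cis (2 * pi * real l / real n - 2 * pi * real m / real n) = zz n (l - m)"
proof -
  assume "m \<le> l"
  then have "2 * pi * real l / real n - 2 * pi * real m / real n = 2 * pi * real (l - m) / real n"
    by (simp add: of_nat_diff diff_divide_distrib right_diff_distrib)
  then show ?thesis unfolding zz_def by simp
qed

lemma orth:
  assumes "n \<ge> 3" "m < n" "l < n"
  shows "(\<Sum>k<n. cnj (zz n m ^ k) * zz n l ^ k) = (if m = l then of_nat n else 0)"
proof -
  have e: "(\<Sum>k<n. cnj (zz n m ^ k) * zz n l ^ k) = (\<Sum>k<n. (cnj (zz n m) * zz n l) ^ k)"
    by (simp add: power_mult_distrib)
  consider "m = l" | "m < l" | "l < m" by linarith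
  then show ?thesis
  proof cases
    case 1
    have "cnj (zz n m) * zz n l = 1" unfolding cnj_zz 1 by simp
    then show ?thesis unfolding e using 1 by simp
  next
    case 2
    have "cnj (zz n m) * zz n l = zz n (l - m)" unfolding cnj_zz using 2 by (simp add: zz_diff)
    then show ?thesis unfolding e using 2 assms sum_zz_0[of "l - m" n] by simp
  next
    case 3
    have "cnj (zz n m) * zz n l = cnj (zz n (m - l))"
      unfolding cnj_zz zz_diff[OF less_imp_le[OF 3], symmetric] by (simp add: cis_cnj)
    then have "(\<Sum>k<n. (cnj (zz n m) * zz n l) ^ k) = cnj (\<Sum>k<n. zz n (m - l) ^ k)"
      by simp
    then show ?thesis unfolding e using 3 assms sum_zz_0[of "m - l" n] by simp
  qed
qed

lemma reidx:
  assumes "i < n"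
  shows "(\<Sum>j<n. complex_of_real (ff n ((j + n - i) mod n)) * z ^ j) = (\<Sum>k<n. complex_of_real (ff n k) * z ^ ((k + i) mod n))"
proof (rule sum.reindex_bij_witness[where i = "\<lambda>k. (k + i) mod n" and j = "\<lambda>j. (j + n - i) mod n"])
  fix a assume a: "a \<in> {..<n}"
  show "((a + n - i) mod n + i) mod n = a" using a assms by (cases "a < i") (auto simp: mod_if)
  show "(a + n - i) mod n \<in> {..<n}" using assms by auto
  show "complex_of_real (ff n ((a + n - i) mod n)) * z ^ ((((a + n - i) mod n) + i) mod n) = complex_of_real (ff n ((a + n - i) mod n)) * z ^ a"
    using a assms by (cases "a < i") (auto simp: mod_if)
next
  fix b assume b: "b \<in> {..<n}"
  show "((b + i) mod n + n - i) mod n = b" using b assms by (cases "b + i < n") (auto simp: mod_if)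
  show "(b + i) mod n \<in> {..<n}" using assms by auto
qed

lemma prod_upt_list: "prod_list (map f [0..<n]) = (\<Prod>i<n. f i)"
  by (induct n) (auto simp: lessThan_Suc mult.commute)

lemma char_poly_cycle:
  assumes n3: "n \<ge> 3"
  shows "char_poly (cycle_dist_sq_matrix n) = (\<Prod>m<n. [:- mu n m, 1:])"
proof -
  define A where "A = cycle_dist_sq_matrix n"
  define Ac where "Ac = map_mat complex_of_real A"
  define F where "F = mat n n (\<lambda>(k, m). zz n m ^ k)"
  define G where "G = mat n n (\<lambda>(m, k). cnj (zz n m ^ k) / of_nat n)"
  define Dg where "Dg = mat n n (\<lambda>(i, j). if i = j then lam n i else 0)"
  have A: "A \<in> carrier_mat n n" unfolding A_def cycle_dist_sq_matrix_def by simp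
  have Ac: "Ac \<in> carrier_mat n n" unfolding Ac_def using A by simp
  have F: "F \<in> carrier_mat n n" unfolding F_def by simp
  have G: "G \<in> carrier_mat n n" unfolding G_def by simp
  have Dg: "Dg \<in> carrier_mat n n" unfolding Dg_def by simp
  have GF: "G * F = 1\<^sub>m n"
  proof (rule eq_matI)
    fix m l assume ml: "m < dim_row (1\<^sub>m n :: complex mat)" "l < dim_col (1\<^sub>m n :: complex mat)"
    then have ml': "m < n" "l < n" by auto
    have "(G * F) $$ (m, l) = (\<Sum>k<n. cnj (zz n m ^ k) / of_nat n * zz n l ^ k)"
      using ml' unfolding G_def F_def by (simp add: scalar_prod_def atLeast0LessThan)
    also have "\<dots> = (\<Sum>k<n. cnj (zz n m ^ k) * zz n l ^ k) / of_nat n"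
      by (simp add: sum_divide_distrib)
    also have "\<dots> = 1\<^sub>m n $$ (m, l)" using orth[OF n3 ml'] ml' n3 by simp
    finally show "(G * F) $$ (m, l) = 1\<^sub>m n $$ (m, l)" .
  qed (use G F in auto)
  have FG: "F * G = 1\<^sub>m n" by (rule mat_mult_left_right_inverse[OF G F GF])
  have AF: "Ac * F = F * Dg"
  proof (rule eq_matI)
    fix i m assume im: "i < dim_row (F * Dg)" "m < dim_col (F * Dg)"
    then have im': "i < n" "m < n" using F Dg by auto
    have "(Ac * F) $$ (i, m) = (\<Sum>j<n. Ac $$ (i, j) * F $$ (j, m))"
      using Ac F im' by (simp add: scalar_prod_def atLeast0LessThan)
    also have "\<dots> = (\<Sum>j<n. complex_of_real (ff n ((j + n - i) mod n)) * zz n m ^ j)"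
      by (rule sum.cong[OF refl]) (use im' A in \<open>simp add: Ac_def F_def A_def A_entry\<close>)
    also have "\<dots> = (\<Sum>k<n. complex_of_real (ff n k) * zz n m ^ ((k + i) mod n))"
      by (rule reidx[OF im'(1)])
    also have "\<dots> = (\<Sum>k<n. complex_of_real (ff n k) * zz n m ^ k) * zz n m ^ i"
    proof -
      have zp: "zz n m ^ n = 1" using zz_pow[of n m] n3 by simp
      show ?thesis unfolding sum_distrib_right power_mod_n[OF zp] by (simp add: power_add mult.assoc)
    qed
    also have "\<dots> = (F * Dg) $$ (i, m)"
      using im' unfolding F_def Dg_def lam_def by (simp add: scalar_prod_def atLeast0LessThan if_distrib cong: if_cong)
    finally show "(Ac * F) $$ (i, m) = (F * Dg) $$ (i, m)" .
  qed (use Ac F Dg in auto)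
  have AcE: "Ac = F * Dg * G"
  proof -
    have "Ac = Ac * (F * G)" unfolding FG using Ac by simp
    also have "\<dots> = (Ac * F) * G" using assoc_mult_mat[OF Ac F G] by simp
    finally show ?thesis unfolding AF .
  qed
  have sim: "similar_mat Ac Dg"
    by (rule similar_matI[OF _ FG GF AcE]) (use Ac Dg F G in auto)
  have ut: "upper_triangular Dg" unfolding Dg_def upper_triangular_def by auto
  have "char_poly Ac = char_poly Dg" by (rule char_poly_similar[OF sim])
  also have "\<dots> = (\<Prod>a \<leftarrow> diag_mat Dg. [:- a, 1:])" by (rule char_poly_upper_triangular[OF Dg ut])
  also have "diag_mat Dg = map (lam n) [0..<n]" unfolding Dg_def diag_mat_def by auto
  also have "(\<Prod>a \<leftarrow> map (lam n) [0..<n]. [:- a, 1:]) = (\<Prod>m<n. [:- lam n m, 1:])"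
    using prod_upt_list[of "\<lambda>m. [:- lam n m, 1:]" n] by (simp add: comp_def)
  also have "\<dots> = (\<Prod>m<n. [:- complex_of_real (mu n m), 1:])"
    by (rule prod.cong[OF refl]) (use lam_real[OF n3] in auto)
  also have "\<dots> = map_poly complex_of_real (\<Prod>m<n. [:- mu n m, 1:])"
    by (simp add: ofr_poly.hom_prod)
  finally have c1: "char_poly Ac = map_poly complex_of_real (\<Prod>m<n. [:- mu n m, 1:])" .
  have c2: "char_poly Ac = map_poly complex_of_real (char_poly A)"
    unfolding Ac_def by (rule of_real_hom.char_poly_hom[OF A])
  have "map_poly complex_of_real (char_poly A) = map_poly complex_of_real (\<Prod>m<n. [:- mu n m, 1:])"
    using c1 c2 by simp
  then show ?thesis unfolding A_def by (rule ofr_poly.injectivity)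
qed



lemma order_prod_linear:
  fixes g :: "nat \<Rightarrow> real"
  assumes "finite M"
  shows "order r (\<Prod>m\<in>M. [:- g m, 1:]) = card {m\<in>M. g m = r}"
  using assms
proof (induction M rule: finite_induct)
  case empty then show ?case by simp
next
  case (insert x M)
  have nz: "(\<Prod>m\<in>M. [:- g m, 1:]) \<noteq> 0" using insert by (auto simp: prod_zero_iff)
  have lin: "[:- g x, 1:] \<noteq> 0" by simp
  have "order r (\<Prod>m\<in>insert x M. [:- g m, 1:]) = order r ([:- g x, 1:] * (\<Prod>m\<in>M. [:- g m, 1:]))"
    unfolding prod.insert[OF insert.hyps] ..
  also have "\<dots> = order r [:- g x, 1:] + order r (\<Prod>m\<in>M. [:- g m, 1:])"
    by (rule order_mult) (use nz lin in \<open>simp only: mult_eq_0_iff\<close>, simp)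
  also have "order r [:- g x, 1:] = (if g x = r then 1 else 0)"
    using order_linear'[of r "- g x"] by auto
  finally have o: "order r (\<Prod>m\<in>insert x M. [:- g m, 1:]) = (if g x = r then 1 else 0) + card {m\<in>M. g m = r}"
    using insert by simp
  have "{m\<in>insert x M. g m = r} = (if g x = r then insert x {m\<in>M. g m = r} else {m\<in>M. g m = r})"
    by auto
  then show ?case unfolding o using insert by auto
qed

lemma count_roots:
  fixes g :: "nat \<Rightarrow> real"
  assumes "\<And>r. P r \<Longrightarrow> Q r"
  shows "(\<Sum>r\<in>{r. poly (\<Prod>m<n. [:- g m, 1:]) r = 0 \<and> P r}. order r (\<Prod>m<n. [:- g m, 1:])) = card {m. m < n \<and> P (g m)}"
proof -
  let ?S = "{m. m < n \<and> P (g m)}"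
  have fin: "finite ?S" by simp
  have R: "{r. poly (\<Prod>m<n. [:- g m, 1:]) r = 0 \<and> P r} = g ` ?S"
    by (auto simp: poly_prod prod_zero_iff)
  have "card ?S = (\<Sum>m\<in>?S. 1)" by simp
  also have "\<dots> = (\<Sum>y\<in>g ` ?S. \<Sum>m\<in>{x\<in>?S. g x = y}. 1)" by (rule sum.image_gen[OF fin])
  also have "\<dots> = (\<Sum>y\<in>g ` ?S. order y (\<Prod>m<n. [:- g m, 1:]))"
  proof (rule sum.cong[OF refl])
    fix y assume "y \<in> g ` ?S"
    then have "P y" by auto
    then have "{x\<in>?S. g x = y} = {m\<in>{..<n}. g m = y}" by auto
    then show "(\<Sum>m\<in>{x\<in>?S. g x = y}. 1) = order y (\<Prod>m<n. [:- g m, 1:])"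
      using order_prod_linear[of "{..<n}" y g] by simp
  qed
  finally show ?thesis unfolding R by simp
qed

lemma card_even_below: "card {m. m < 2 * p \<and> even m} = p"
proof -
  have "{m. m < 2 * p \<and> even m} = (\<lambda>k. 2 * k) ` {..<p}" by (auto elim!: evenE)
  then show ?thesis by (simp add: card_image inj_on_def)
qed

lemma card_odd_below: "card {m. m < 2 * p \<and> odd m} = p"
proof -
  have "{m. m < 2 * p \<and> odd m} = (\<lambda>k. 2 * k + 1) ` {..<p}" by (auto elim!: oddE)
  then show ?thesis by (simp add: card_image inj_on_def)
qed

lemma card_E: "card {m. 0 < m \<and> even m \<and> 2 * m < 2 * p + 1} = p div 2"
proof -
  have "{m. 0 < m \<and> even m \<and> 2 * m < 2 * p + 1} = (\<lambda>k. 2 * k) ` {1..p div 2}"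
  proof (rule equalityI; rule subsetI)
    fix m assume "m \<in> {m. 0 < m \<and> even m \<and> 2 * m < 2 * p + 1}"
    then obtain k where "m = 2 * k" "0 < k" "4 * k < 2 * p + 1" by (auto elim!: evenE)
    then show "m \<in> (\<lambda>k. 2 * k) ` {1..p div 2}" by (intro image_eqI[of _ _ k]) auto
  next
    fix m assume "m \<in> (\<lambda>k. 2 * k) ` {1..p div 2}"
    then show "m \<in> {m. 0 < m \<and> even m \<and> 2 * m < 2 * p + 1}" by auto
  qed
  then show ?thesis by (simp add: card_image inj_on_def)
qed

lemma card_O: "card {m. m < 2 * p + 1 \<and> odd m \<and> 2 * p + 1 < 2 * m} = p div 2"
proof -
  have "{m. m < 2 * p + 1 \<and> odd m \<and> 2 * p + 1 < 2 * m} = (\<lambda>m. 2 * p + 1 - m) ` {m. 0 < m \<and> even m \<and> 2 * m < 2 * p + 1}"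
  proof (rule equalityI; rule subsetI)
    fix m assume m: "m \<in> {m. m < 2 * p + 1 \<and> odd m \<and> 2 * p + 1 < 2 * m}"
    show "m \<in> (\<lambda>m. 2 * p + 1 - m) ` {m. 0 < m \<and> even m \<and> 2 * m < 2 * p + 1}"
      by (rule image_eqI[of _ _ "2 * p + 1 - m"]) (use m in auto)
  next
    fix m assume "m \<in> (\<lambda>m. 2 * p + 1 - m) ` {m. 0 < m \<and> even m \<and> 2 * m < 2 * p + 1}"
    then show "m \<in> {m. m < 2 * p + 1 \<and> odd m \<and> 2 * p + 1 < 2 * m}" by auto
  qed
  moreover have "inj_on (\<lambda>m. 2 * p + 1 - m) {m. 0 < m \<and> even m \<and> 2 * m < 2 * p + 1}"
    by (auto simp: inj_on_def)
  ultimately show ?thesis using card_E by (simp add: card_image)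
qed



lemma pos_neg_counts:
  assumes n3: "n \<ge> 3"
  shows "i_plus (cycle_dist_sq_matrix n) = card {m. m < n \<and> mu n m > 0}"
    "i_minus (cycle_dist_sq_matrix n) = n - card {m. m < n \<and> mu n m > 0}"
    "\<And>m. m < n \<Longrightarrow> mu n m \<noteq> 0"
proof -
  show nz: "\<And>m. m < n \<Longrightarrow> mu n m \<noteq> 0"
  proof -
    fix m assume m: "m < n"
    show "mu n m \<noteq> 0"
    proof (cases "even n")
      case True then obtain p where "n = 2 * p" by auto
      moreover have "p \<ge> 2" using n3 calculation by simp
      ultimately show ?thesis using mu_even m by blast
    next
      case False then obtain p where "n = 2 * p + 1" using oddE by blast
      moreover have "p \<ge> 1" using n3 calculation by simp
      ultimately show ?thesis using mu_odd m by blast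
    qed
  qed
  show "i_plus (cycle_dist_sq_matrix n) = card {m. m < n \<and> mu n m > 0}"
    unfolding i_plus_def char_poly_cycle[OF n3] by (rule count_roots[of "\<lambda>r. r > 0" "\<lambda>r. r > 0"]) 
  have "i_minus (cycle_dist_sq_matrix n) = card {m. m < n \<and> mu n m < 0}"
    unfolding i_minus_def char_poly_cycle[OF n3] by (rule count_roots[of "\<lambda>r. r < 0" "\<lambda>r. r < 0"])
  also have "{m. m < n \<and> mu n m < 0} = {..<n} - {m. m < n \<and> mu n m > 0}"
    using nz by force
  also have "card \<dots> = n - card {m. m < n \<and> mu n m > 0}"
    by (subst card_Diff_subset) auto
  finally show "i_minus (cycle_dist_sq_matrix n) = n - card {m. m < n \<and> mu n m > 0}" .
qed

lemma pos_even:
  assumes "n = 2 * p" "p \<ge> 2"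
  shows "card {m. m < n \<and> mu n m > 0} = p"
proof -
  have "{m. m < n \<and> mu n m > 0} = {m. m < 2 * p \<and> even m}" using mu_even[OF assms] assms(1) by blast
  then show ?thesis using card_even_below by simp
qed

lemma pos_odd:
  assumes "n = 2 * p + 1" "p \<ge> 1"
  shows "card {m. m < n \<and> mu n m > 0} = 1 + 2 * (p div 2)"
proof -
  define E where "E = {m. 0 < m \<and> even m \<and> 2 * m < 2 * p + 1}"
  define Od where "Od = {m. m < 2 * p + 1 \<and> odd m \<and> 2 * p + 1 < 2 * m}"
  have "{m. m < n \<and> mu n m > 0} = insert 0 (E \<union> Od)"
    using mu_odd[OF assms] assms(1) unfolding E_def Od_def by auto
  moreover have "finite E" "finite Od" unfolding E_def Od_def by (auto intro: finite_subset[of _ "{..<2*p+1}"])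
  moreover have "0 \<notin> E \<union> Od" "E \<inter> Od = {}" unfolding E_def Od_def by auto
  ultimately have "card {m. m < n \<and> mu n m > 0} = 1 + card E + card Od"
    by (simp add: card_Un_disjoint)
  then show ?thesis using card_E[of p] card_O[of p] unfolding E_def Od_def by simp
qed

theorem corollary5p3:
  fixes n :: nat
  assumes "n \<ge> 3"
  shows "(n mod 4 = 1 \<longrightarrow>
            i_plus (cycle_dist_sq_matrix n) = (n - 1) div 2 + 1 \<and>
            i_minus (cycle_dist_sq_matrix n) = (n - 1) div 2)
       \<and> (n mod 4 = 3 \<longrightarrow>
            i_plus (cycle_dist_sq_matrix n) = (n - 1) div 2 \<and>
            i_minus (cycle_dist_sq_matrix n) = (n - 1) div 2 + 1)
       \<and> (even n \<longrightarrow>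
            i_plus (cycle_dist_sq_matrix n) = n div 2 \<and>
            i_minus (cycle_dist_sq_matrix n) = n div 2)"
proof (cases "even n")
  case True
  then obtain p where p: "n = 2 * p" by auto
  then have "p \<ge> 2" using assms by simp
  then have "card {m. m < n \<and> mu n m > 0} = p" using pos_even p by blast
  moreover have "n mod 4 \<noteq> 1" "n mod 4 \<noteq> 3" using p by presburger+
  ultimately show ?thesis using pos_neg_counts[OF assms] p by auto
next
  case False
  then obtain p where p: "n = 2 * p + 1" using oddE by blast
  then have p1: "p \<ge> 1" using assms by simp
  have c: "card {m. m < n \<and> mu n m > 0} = 1 + 2 * (p div 2)" using pos_odd[OF p p1] .
  have "n mod 4 = 1 \<longleftrightarrow> even p" "n mod 4 = 3 \<longleftrightarrow> odd p" using p by presburger+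
  moreover have "even p \<Longrightarrow> 2 * (p div 2) = p" "odd p \<Longrightarrow> 2 * (p div 2) = p - 1" by presburger+
  ultimately show ?thesis using pos_neg_counts[OF assms] c p False p1 by auto
qed

end
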